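(* Let $n,x$ be integers with $1<x<n$, so that $G=C_{2n}(x,1,n)$ is a $5$-regular circulant graph. If $n\equiv 0 \pmod 3$, $x\equiv 1\pmod 3$ and $x<\tfrac{n}{2}$, then $G$ is word-representable.
   Context: Two distinct letters $x,y$ alternate in a word $w$ if, after deleting all other letters from $w$, the resulting word is of the form $xyxy\cdots$ or $yxyx\cdots$ (of even or odd length). A graph $G=(V,E)$ is word-representable if there is a word $w$ over the alphabet $V$, containing every letter of $V$ at least once, such that for all distinct $x,y\in V$, $xy\in E$ if and only if $x$ and $y$ alternate in $w$. For an integer $m$ and a set $R$ of positive integers each at most $m/2$, the circulant graph $C_m(R)$ has vertex set $\{0,1,\dots,m-1\}$, with $i$ and $j$ adjacent iff $\min(|i-j|,\,m-|i-j|)\in R$. $C_{2n}(x,1,n)$ denotes the circulant graph on $2n$ vertices with jump set $\{1,x,n\}$; it is $5$-regular exactly when $1<x<n$. *)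

theory Defs
  imports Main
begin

definition alternate_in :: "'a list \<Rightarrow> 'a \<Rightarrow> 'a \<Rightarrow> bool" where
  "alternate_in w x y \<longleftrightarrow>
     (let u = filter (\<lambda>z. z = x \<or> z = y) w in
        \<forall>i. Suc i < length u \<longrightarrow> u ! i \<noteq> u ! Suc i)"

definition word_representable :: "'a set \<Rightarrow> ('a \<Rightarrow> 'a \<Rightarrow> bool) \<Rightarrow> bool" where
  "word_representable V E \<longleftrightarrow>
     (\<exists>w. set w = V \<and>
          (\<forall>x\<in>V. \<forall>y\<in>V. x \<noteq> y \<longrightarrow> (E x y \<longleftrightarrow> alternate_in w x y)))"

definition circulant_vertices :: "nat \<Rightarrow> nat set" where
  "circulant_vertices m = {0..<m}"

definition circulant_adj :: "nat \<Rightarrow> nat set \<Rightarrow> nat \<Rightarrow> nat \<Rightarrow> bool" where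
  "circulant_adj m R i j \<longleftrightarrow>
     i < m \<and> j < m \<and>
     (let d = (if i \<le> j then j - i else i - j) in min d (m - d) \<in> R)"

end

theory Submission
  imports Defs "HOL-Number_Theory.Cong"
begin


lemma succ_nth: "successively P xs \<longleftrightarrow> (\<forall>i. Suc i < length xs \<longrightarrow> P (xs!i) (xs!Suc i))"
proof (induction P xs rule: successively.induct)
  case (3 P x y xs)
  show ?case
  proof
    assume "successively P (x # y # xs)"
    then show "\<forall>i. Suc i < length (x # y # xs) \<longrightarrow> P ((x # y # xs) ! i) ((x # y # xs) ! Suc i)"
      using 3 by (auto simp: nth_Cons split: nat.split)
  next
    assume h: "\<forall>i. Suc i < length (x # y # xs) \<longrightarrow> P ((x # y # xs) ! i) ((x # y # xs) ! Suc i)"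
    have "P x y" using h[rule_format, of 0] by simp
    moreover have "\<forall>i. Suc i < length (y # xs) \<longrightarrow> P ((y # xs) ! i) ((y # xs) ! Suc i)"
      using h by (metis Suc_less_eq length_Cons nth_Cons_Suc)
    ultimately show "successively P (x # y # xs)" using 3 by simp
  qed
qed auto

lemma alt_succ: "alternate_in w x y \<longleftrightarrow> successively (\<noteq>) (filter (\<lambda>z. z = x \<or> z = y) w)"
  unfolding alternate_in_def Let_def succ_nth by simp

lemma alt_sym: "alternate_in w x y \<longleftrightarrow> alternate_in w y x"
  unfolding alt_succ by (simp add: disj_commute)

lemma filt_upt2:
  assumes "u \<noteq> v"
  shows "filter (\<lambda>z. (z = u \<or> z = v) \<and> R z) [0..<N] =
    (if u < v then (if u < N \<and> R u then [u] else []) @ (if v < N \<and> R v then [v] else [])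
     else (if v < N \<and> R v then [v] else []) @ (if u < N \<and> R u then [u] else []))"
  using assms by (induction N) auto



lemma filt_seg:
  assumes "u \<noteq> v"
  shows "filter (\<lambda>z. z = u \<or> z = v) (filter R [0..<N]) =
    (if u < v then (if u < N \<and> R u then [u] else []) @ (if v < N \<and> R v then [v] else [])
     else (if v < N \<and> R v then [v] else []) @ (if u < N \<and> R u then [u] else []))"
  using assms by (induction N) auto

definition seg :: "(nat \<Rightarrow> nat) \<Rightarrow> nat \<Rightarrow> nat \<Rightarrow> nat \<Rightarrow> nat \<Rightarrow> nat list" where
  "seg col N k x y = filter (\<lambda>z. col z = k \<and> z \<noteq> x \<and> z \<noteq> y) [0..<N]"

definition L0 :: "(nat \<Rightarrow> nat) \<Rightarrow> nat \<Rightarrow> nat list" where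
  "L0 col N = filter (\<lambda>z. col z = 0) [0..<N] @ filter (\<lambda>z. col z = 1) [0..<N] @ filter (\<lambda>z. col z = 2) [0..<N]"

definition pieceV :: "(nat \<Rightarrow> nat) \<Rightarrow> nat \<Rightarrow> nat \<Rightarrow> nat \<Rightarrow> nat list" where
  "pieceV col N x y = L0 col N @
     (if col y = 0 then [y,x] else []) @ seg col N 0 x y @
     (if col y = 1 then [y,x] else []) @ seg col N 1 x y @
     (if col y = 2 then [y,x] else []) @ seg col N 2 x y"

definition pieceT :: "(nat \<Rightarrow> nat) \<Rightarrow> nat \<Rightarrow> nat \<Rightarrow> nat \<Rightarrow> nat list" where
  "pieceT col N x y = [x] @ seg col N 0 x y @ seg col N 1 x y @ seg col N 2 x y @ [x,y] @
     seg col N 0 x y @ seg col N 1 x y @ seg col N 2 x y @ [y]"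

definition piece :: "(nat \<Rightarrow> nat) \<Rightarrow> nat \<Rightarrow> nat \<Rightarrow> nat \<Rightarrow> nat list" where
  "piece col N x y = (if col x = 0 \<and> col y = 2 then pieceT col N x y else pieceV col N x y)"

lemma seg_filt:
  assumes "u < N" "v < N" "col u \<noteq> col v"
  shows "filter (\<lambda>z. z = u \<or> z = v) (seg col N k x y) =
    (if col u = k \<and> u \<noteq> x \<and> u \<noteq> y then [u] else []) @ (if col v = k \<and> v \<noteq> x \<and> v \<noteq> y then [v] else [])"
proof -
  have "u \<noteq> v" using assms by auto
  show ?thesis unfolding seg_def filt_seg[OF \<open>u \<noteq> v\<close>] using assms by auto
qed

lemma cls_filt:
  assumes "u < N" "v < N" "col u \<noteq> col v"
  shows "filter (\<lambda>z. z = u \<or> z = v) (filter (\<lambda>z. col z = k) [0..<N]) =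
    (if col u = k then [u] else []) @ (if col v = k then [v] else [])"
proof -
  have "u \<noteq> v" using assms by auto
  show ?thesis unfolding filt_seg[OF \<open>u \<noteq> v\<close>] using assms by auto
qed

lemma L0_edge:
  assumes "u < N" "v < N" "col u < col v" "col v < 3"
  shows "filter (\<lambda>z. z = u \<or> z = v) (L0 col N) = [u,v]"
proof -
  have "col u \<noteq> col v" using assms by auto
  then show ?thesis using assms unfolding L0_def filter_append cls_filt[OF assms(1,2) \<open>col u \<noteq> col v\<close>] by auto
qed

lemma piece_edge:
  assumes "u < N" "v < N" "col u < col v" "col v < 3"
    and "col x \<le> col y" "col y < 3"
    and "\<not> (u = x \<and> v = y)" "\<not> (u = y \<and> v = x)" "x \<noteq> y"
  shows "filter (\<lambda>z. z = u \<or> z = v) (piece col N x y) = [u,v,u,v]"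
proof -
  have cne: "col u \<noteq> col v" using assms by auto
  note sf = seg_filt[OF assms(1,2) cne]
  show ?thesis
  proof (cases "col x = 0 \<and> col y = 2")
    case True
    then have e: "piece col N x y = pieceT col N x y" unfolding piece_def by simp
    show ?thesis unfolding e pieceT_def filter_append sf
      using assms True by (cases "u = x"; cases "v = y"; auto)
  next
    case False
    then have e: "piece col N x y = pieceV col N x y" unfolding piece_def by (rule if_not_P)
    have "filter (\<lambda>z. z = u \<or> z = v) (pieceV col N x y) = [u,v] @ filter (\<lambda>z. z = u \<or> z = v) (
     (if col y = 0 then [y,x] else []) @ seg col N 0 x y @
     (if col y = 1 then [y,x] else []) @ seg col N 1 x y @
     (if col y = 2 then [y,x] else []) @ seg col N 2 x y)"
      by (simp only: pieceV_def filter_append L0_edge[OF assms(1-4)] append.assoc)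
    also have "\<dots> = [u,v,u,v]"
      using assms False apply (simp only: filter_append sf filter.simps if_distrib[of "filter _"])
      apply (auto split: if_split_asm)
      done
    finally show ?thesis unfolding e .
  qed
qed


lemma seg_xy: "filter (\<lambda>z. z = x \<or> z = y) (seg col N k x y) = []"
  unfolding seg_def by (induction N) auto

lemma L0_xy:
  assumes "x < N" "y < N" "x \<noteq> y" "col x \<le> col y" "col y < 3" "col x = col y \<longrightarrow> x < y"
  shows "filter (\<lambda>z. z = x \<or> z = y) (L0 col N) = [x,y]"
  using assms unfolding L0_def filter_append filt_seg[OF assms(3)] by (auto split: if_split_asm)

lemma piece_kill:
  assumes "x < N" "y < N" "x \<noteq> y" "col x \<le> col y" "col y < 3" "col x = col y \<longrightarrow> x < y"
  shows "\<not> successively (\<noteq>) (filter (\<lambda>z. z = x \<or> z = y) (piece col N x y))"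
proof (cases "col x = 0 \<and> col y = 2")
  case True
  then have e: "piece col N x y = pieceT col N x y" unfolding piece_def by simp
  show ?thesis unfolding e pieceT_def filter_append seg_xy using assms by simp
next
  case False
  then have e: "piece col N x y = pieceV col N x y" unfolding piece_def by (rule if_not_P)
  have "filter (\<lambda>z. z = x \<or> z = y) (pieceV col N x y) = [x,y] @ filter (\<lambda>z. z = x \<or> z = y) (
     (if col y = 0 then [y,x] else []) @ (if col y = 1 then [y,x] else []) @ (if col y = 2 then [y,x] else []))"
    by (simp only: pieceV_def filter_append seg_xy L0_xy[OF assms] append.assoc append_Nil append_Nil2)
  also have "\<dots> = [x,y,y,x]" using assms False
    apply (simp only: filter_append filter.simps if_distrib[of "filter _"])
    apply (auto split: if_split_asm)
    done
  finally show ?thesis unfolding e by simp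
qed


lemma succ_rep: "u \<noteq> v \<Longrightarrow> successively (\<noteq>) (concat (replicate m [u,v]))"
proof (induction m)
  case (Suc m)
  have "concat (replicate (Suc m) [u,v]) = [u,v] @ concat (replicate m [u,v])" by simp
  moreover have "concat (replicate m [u,v]) = [] \<or> hd (concat (replicate m [u,v])) = u"
    by (cases m) auto
  ultimately show ?case using Suc by (auto simp only: successively_append_iff) auto
qed simp

lemma blocks_eq: "[u,v] @ concat (map (\<lambda>_. [u,v,u,v]) xs) = concat (replicate (1 + 2 * length xs) [u,v])"
proof (induction xs)
  case (Cons a xs)
  have "concat (replicate (1 + 2 * length (a # xs)) [u,v]) = [u,v] @ [u,v] @ concat (replicate (1 + 2 * length xs) [u,v])"
    by (simp add: replicate_add[symmetric])
  also have "\<dots> = [u,v] @ [u,v] @ [u,v] @ concat (map (\<lambda>_. [u,v,u,v]) xs)" using Cons by simp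
  finally show ?case by simp
qed simp

lemma set_piece: "a < N \<Longrightarrow> b < N \<Longrightarrow> set (piece col N a b) \<subseteq> {0..<N}"
  by (auto simp: piece_def pieceT_def pieceV_def seg_def L0_def)

lemma three_col_wr:
  fixes E :: "nat \<Rightarrow> nat \<Rightarrow> bool" and col :: "nat \<Rightarrow> nat"
  assumes sym: "\<And>i j. i < N \<Longrightarrow> j < N \<Longrightarrow> E i j \<Longrightarrow> E j i"
    and c3: "\<And>i. i < N \<Longrightarrow> col i < 3"
    and prp: "\<And>i j. i < N \<Longrightarrow> j < N \<Longrightarrow> E i j \<Longrightarrow> col i \<noteq> col j"
  shows "word_representable {0..<N} E"
proof -
  define prs where "prs = filter (\<lambda>(a,b). a \<noteq> b \<and> \<not> E a b \<and> col a \<le> col b) (List.product [0..<N] [0..<N])"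
  define f where "f = (\<lambda>(a,b). piece col N a b)"
  define w where "w = L0 col N @ concat (map f prs)"
  have sprs: "set prs = {(a,b). a < N \<and> b < N \<and> a \<noteq> b \<and> \<not> E a b \<and> col a \<le> col b}"
    unfolding prs_def by auto
  have sL0: "set (L0 col N) = {0..<N}"
  proof
    show "set (L0 col N) \<subseteq> {0..<N}" unfolding L0_def by auto
    show "{0..<N} \<subseteq> set (L0 col N)"
    proof
      fix z assume "z \<in> {0..<N}"
      then have z: "z < N" by auto
      then have "col z < 3" using c3 by auto
      then have "col z = 0 \<or> col z = 1 \<or> col z = 2" by linarith
      then show "z \<in> set (L0 col N)" unfolding L0_def using z by auto
    qed
  qed
  have sp: "set (f p) \<subseteq> {0..<N}" if "p \<in> set prs" for p
  proof -
    obtain a b where p: "p = (a,b)" by fastforce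
    have "a < N" "b < N" using that p sprs by auto
    then show ?thesis using set_piece[of a N b col] unfolding p f_def by simp
  qed
  have "set (concat (map f prs)) \<subseteq> {0..<N}"
    using sp by auto
  then have setw: "set w = {0..<N}" unfolding w_def using sL0 by auto
  have edge: "alternate_in w u v" if "u < N" "v < N" "E u v" "col u < col v" for u v
  proof -
    have cv: "col v < 3" using c3 that by auto
    have blk: "filter (\<lambda>z. z = u \<or> z = v) (f p) = [u,v,u,v]" if "p \<in> set prs" for p
    proof -
      obtain a b where p: "p = (a,b)" by fastforce
      have ab: "a < N" "b < N" "a \<noteq> b" "\<not> E a b" "col a \<le> col b" using that p sprs by auto
      have "\<not> (u = a \<and> v = b)" using ab \<open>E u v\<close> by auto
      moreover have "\<not> (u = b \<and> v = a)" using ab \<open>E u v\<close> sym \<open>u < N\<close> \<open>v < N\<close> by auto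
      ultimately show ?thesis unfolding p f_def using piece_edge[OF \<open>u < N\<close> \<open>v < N\<close> \<open>col u < col v\<close> cv ab(5) c3[OF ab(2)]] ab(3)
        by simp
    qed
    have M: "map (filter (\<lambda>z. z = u \<or> z = v)) (map f prs) = map (\<lambda>_. [u,v,u,v]) prs"
      using blk by (simp add: map_eq_conv)
    have "filter (\<lambda>z. z = u \<or> z = v) w = [u,v] @ concat (map (filter (\<lambda>z. z = u \<or> z = v)) (map f prs))"
      unfolding w_def filter_append filter_concat L0_edge[OF \<open>u < N\<close> \<open>v < N\<close> \<open>col u < col v\<close> cv]
      by (rule refl)
    also have "\<dots> = [u,v] @ concat (map (\<lambda>_. [u,v,u,v]) prs)" by (simp only: M)
    finally have FF: "filter (\<lambda>z. z = u \<or> z = v) w = [u,v] @ concat (map (\<lambda>_. [u,v,u,v]) prs)" .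
    have "u \<noteq> v" using \<open>col u < col v\<close> by auto
    show ?thesis unfolding alt_succ FF blocks_eq by (rule succ_rep[OF \<open>u \<noteq> v\<close>])
  qed
  have nonedge: "\<not> alternate_in w u v" if "u < N" "v < N" "u \<noteq> v" "\<not> E u v" "col u \<le> col v" "col u = col v \<longrightarrow> u < v" for u v
  proof -
    have mem: "(u,v) \<in> set prs" using that sprs by auto
    then obtain xs ys where sp: "prs = xs @ (u,v) # ys" by (meson split_list)
    have "filter (\<lambda>z. z = u \<or> z = v) w = (filter (\<lambda>z. z = u \<or> z = v) (L0 col N @ concat (map f xs)))
      @ filter (\<lambda>z. z = u \<or> z = v) (piece col N u v) @ filter (\<lambda>z. z = u \<or> z = v) (concat (map f ys))"
      unfolding w_def sp f_def by simp
    then show ?thesis unfolding alt_succ using piece_kill[OF that(1,2,3,5) c3[OF that(2)] that(6)]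
      by (simp add: successively_append_iff)
  qed
  show ?thesis unfolding word_representable_def
  proof (intro exI conjI ballI impI)
    show "set w = {0..<N}" by (rule setw)
    fix a b assume ab: "a \<in> {0..<N}" "b \<in> {0..<N}" "a \<noteq> b"
    then have abN: "a < N" "b < N" by auto
    show "E a b = alternate_in w a b"
    proof (cases "E a b")
      case True
      then have "E b a" using sym abN by auto
      have "col a \<noteq> col b" using prp abN True by auto
      then show ?thesis using edge[OF abN True] edge[OF abN(2,1) \<open>E b a\<close>] True alt_sym[of w a b]
        by (cases "col a < col b") auto
    next
      case False
      then have "\<not> E b a" using sym abN by auto
      consider "col a < col b" | "col b < col a" | "col a = col b \<and> a < b" | "col a = col b \<and> b < a"
        using ab(3) by linarith
      then show ?thesis
      proof cases
        case 1 then show ?thesis using nonedge[OF abN ab(3) False] False by auto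
      next
        case 2 then show ?thesis using nonedge[OF abN(2,1) _ \<open>\<not> E b a\<close>] ab(3) False alt_sym[of w a b] by auto
      next
        case 3 then show ?thesis using nonedge[OF abN ab(3) False] False by auto
      next
        case 4 then show ?thesis using nonedge[OF abN(2,1) _ \<open>\<not> E b a\<close>] ab(3) False alt_sym[of w a b] by auto
      qed
    qed
  qed
qed


definition sb :: "nat \<Rightarrow> nat \<Rightarrow> nat" where
  "sb t i = (if i < 2*t then 0 else if i < 4*t then 1 else 2)"
definition ccol :: "nat \<Rightarrow> nat \<Rightarrow> nat" where
  "ccol t i = (i + sb t i) mod 3"

lemma m31: "(3 * m + 1) mod 3 = (1::nat)"
  by simp

lemma ccol_lt: "ccol t i < 3" unfolding ccol_def by simp

lemma key: assumes "ccol t i = ccol t (i + d)" shows "sb t i mod 3 = (d + sb t (i + d)) mod 3"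
proof -
  have "(i + sb t i) mod 3 = (i + (d + sb t (i + d))) mod 3" using assms unfolding ccol_def by (simp add: add.assoc)
  then show ?thesis using cong_add_lcancel_nat[of i "sb t i" "d + sb t (i + d)" 3] unfolding cong_def by simp
qed

lemma xmod: fixes x k :: nat assumes "x mod 3 = 1" shows "(x + k) mod 3 = (1 + k) mod 3"
  using assms mod_add_left_eq[of x 3 k] by simp

lemma sb3: "sb t i = 0 \<or> sb t i = 1 \<or> sb t i = 2" unfolding sb_def by auto

lemma fin1: fixes s s' :: nat assumes "s = 0 \<or> s = 1 \<or> s = 2" "s' = s \<or> s' = s + 1"
  shows "s mod 3 \<noteq> (1 + s') mod 3"
  using assms by auto

lemma fin2: fixes s s' :: nat assumes "s = 0 \<or> s = 1 \<or> s = 2" "s' = s + 1 \<or> s' = s + 2"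
  shows "s mod 3 \<noteq> s' mod 3"
  using assms by auto

lemma d1: assumes "i + 1 < 6 * t" shows "ccol t i \<noteq> ccol t (i + 1)"
proof
  assume "ccol t i = ccol t (i + 1)"
  then have k: "sb t i mod 3 = (1 + sb t (i + 1)) mod 3" by (rule key)
  have "sb t (i+1) = sb t i \<or> sb t (i+1) = sb t i + 1" unfolding sb_def by auto
  then show False using k fin1 sb3 by blast
qed

lemma dx: assumes "i + x < 6 * t" "x mod 3 = 1" "2 * x < 3 * t" shows "ccol t i \<noteq> ccol t (i + x)"
proof
  assume "ccol t i = ccol t (i + x)"
  then have k: "sb t i mod 3 = (1 + sb t (i + x)) mod 3" using key xmod[OF assms(2)] by metis
  have "sb t (i+x) = sb t i \<or> sb t (i+x) = sb t i + 1" using assms unfolding sb_def by auto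
  then show False using k fin1 sb3 by blast
qed

lemma dn: assumes "i + 3 * t < 6 * t" shows "ccol t i \<noteq> ccol t (i + 3 * t)"
proof
  assume "ccol t i = ccol t (i + 3 * t)"
  then have k: "sb t i mod 3 = (3 * t + sb t (i + 3 * t)) mod 3" by (rule key)
  then have k: "sb t i mod 3 = sb t (i + 3 * t) mod 3" by simp
  have "sb t (i+3*t) = sb t i + 1 \<or> sb t (i+3*t) = sb t i + 2" using assms unfolding sb_def by auto
  then show False using k fin2 sb3 by blast
qed

lemma dw1: assumes "i + (6 * t - 1) < 6 * t" "0 < t" shows "ccol t i \<noteq> ccol t (i + (6 * t - 1))"
proof
  assume "ccol t i = ccol t (i + (6 * t - 1))"
  then have k: "sb t i mod 3 = ((6 * t - 1) + sb t (i + (6 * t - 1))) mod 3" by (rule key)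
  have i: "i = 0" using assms by auto
  have "sb t 0 = 0" "sb t (6 * t - 1) = 2" using assms unfolding sb_def by auto
  then have "(6 * t - 1 + 2) mod 3 = 0" using k i by simp
  moreover have "6 * t - 1 + 2 = 3 * (2 * t) + 1" using assms by simp
  moreover have "(3 * (2 * t) + 1) mod 3 = (1::nat)" by (rule m31)
  ultimately show False by simp
qed

lemma dwx: assumes "i + (6 * t - x) < 6 * t" "x mod 3 = 1" "2 * x < 3 * t" "x > 1"
  shows "ccol t i \<noteq> ccol t (i + (6 * t - x))"
proof
  assume "ccol t i = ccol t (i + (6 * t - x))"
  then have k: "sb t i mod 3 = ((6 * t - x) + sb t (i + (6 * t - x))) mod 3" by (rule key)
  have "sb t i = 0" "sb t (i + (6 * t - x)) = 2" using assms unfolding sb_def by auto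
  then have k2: "(6 * t - x + 2) mod 3 = 0" using k by simp
  obtain q where q: "x = 3 * q + 1" using assms(2) by (metis mod_div_decomp add.commute mult.commute)
  have "6 * t - x + 2 = 3 * (2 * t - q) + 1" using assms q by simp
  moreover have "(3 * (2 * t - q) + 1) mod 3 = (1::nat)" by (rule m31)
  ultimately show False using k2 by simp
qed


lemma lt_case:
  fixes n x t i j :: nat
  assumes n: "n = 3 * t" and x1: "1 < x" and xm: "x mod 3 = 1" and x2: "2 * x < n"
    and ij: "i < j" "j < 2 * n" and adj: "circulant_adj (2 * n) {1, x, n} i j"
  shows "ccol t i \<noteq> ccol t j"
proof -
  define d where "d = j - i"
  have j: "j = i + d" using ij d_def by auto
  have m: "min d (2 * n - d) \<in> {1, x, n}" using adj ij unfolding circulant_adj_def Let_def d_def by auto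
  have t0: "0 < t" using n x1 x2 by auto
  have "d = 1 \<or> d = x \<or> d = 3 * t \<or> d = 6 * t - 1 \<or> d = 6 * t - x"
    using m n j ij by (auto simp: min_def split: if_splits)
  moreover have "i + d < 6 * t" using j ij n by auto
  ultimately show ?thesis unfolding j using d1 dx dn dw1 dwx xm x2 n x1 t0 by auto
qed

theorem theorem23:
  fixes n x :: nat
  assumes "1 < x" and "x < n"
    and "n mod 3 = 0" and "x mod 3 = 1"
    and "2 * x < n"
  shows "word_representable (circulant_vertices (2 * n)) (circulant_adj (2 * n) {1, x, n})"
proof -
  obtain t where n: "n = 3 * t" using assms(3) by auto
  have sym: "circulant_adj (2 * n) {1, x, n} j i" if "circulant_adj (2 * n) {1, x, n} i j" for i j
    using that unfolding circulant_adj_def Let_def by (auto split: if_splits)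
  have nrefl: "\<not> circulant_adj (2 * n) {1, x, n} i i" for i
    using assms unfolding circulant_adj_def Let_def by auto
  have prp: "ccol t i \<noteq> ccol t j" if "i < 2 * n" "j < 2 * n" "circulant_adj (2 * n) {1, x, n} i j" for i j
  proof -
    consider "i < j" | "i = j" | "j < i" by linarith
    then show ?thesis
    proof cases
      case 1 show ?thesis using lt_case[OF n assms(1,4,5) 1 that(2,3)] .
    next
      case 2 then show ?thesis using nrefl that(3) by auto
    next
      case 3 then show ?thesis using lt_case[OF n assms(1,4,5) 3 that(1) sym[OF that(3)]] by auto
    qed
  qed
  show ?thesis unfolding circulant_vertices_def
  proof (rule three_col_wr[where col = "ccol t"])
    fix i j assume "i < 2 * n" "j < 2 * n" "circulant_adj (2 * n) {1, x, n} i j"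
    then show "circulant_adj (2 * n) {1, x, n} j i" using sym by blast
  next
    fix i show "ccol t i < 3" by (rule ccol_lt)
  next
    fix i j assume "i < 2 * n" "j < 2 * n" "circulant_adj (2 * n) {1, x, n} i j"
    then show "ccol t i \<noteq> ccol t j" by (rule prp)
  qed
qed

end
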